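(* Let $q$ be a prime power, $k<n$ integers and ${\mathcal D}$ a probability distribution on $\{0,1,\dots,k\}$. Consider the following randomized algorithm PrangeOne on input ${\mathbf{H}}\in\mathbb{F}_q^{(n-k)\times n}$ and ${\mathbf{s}}\in\mathbb{F}_q^{n-k}$: draw $t\sim{\mathcal D}$; let ${\mathcal I}$ be an information set of the code $\{{\mathbf{x}}:{\mathbf{x}}{\mathbf{H}}^\top={\mathbf{0}}\}$ (a set of $k$ positions whose complement indexes $n-k$ linearly independent columns of ${\mathbf{H}}$); draw ${\mathbf{x}}$ uniformly among the vectors of $\mathbb{F}_q^n$ with $|{\mathbf{x}}_{\mathcal I}|=t$; output the unique ${\mathbf{e}}\in\mathbb{F}_q^n$ with ${\mathbf{e}}{\mathbf{H}}^\top={\mathbf{s}}$ and ${\mathbf{e}}_{\mathcal I}={\mathbf{x}}_{\mathcal I}$. When ${\mathbf{H}}$ is chosen uniformly at random in $\mathbb{F}_q^{(n-k)\times n}$ and ${\mathbf{s}}$ uniformly at random in $\mathbb{F}_q^{n-k}$, the output ${\mathbf{e}}$ satisfies $|{\mathbf{e}}|=S+T$, where $S\in\{0,\dots,n-k\}$ and $T\in\{0,\dots,k\}$ are independent random variables, $S$ is distributed as the Hamming weight of a uniformly random vector of $\mathbb{F}_q^{n-k}$, and $\mathbb{P}(T=t)={\mathcal D}(t)$. Consequently $$\mathbb{P}(|{\mathbf{e}}|=w)=\sum_{t=0}^{w}\frac{\binom{n-k}{w-t}(q-1)^{w-t}}{q^{n-k}}{\mathcal D}(t),\qquad \mathbb{E}(|{\mathbf{e}}|)=\overline{{\mathcal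 D}}+\frac{q-1}{q}(n-k),$$ where $\overline{{\mathcal D}}=\sum_{t=0}^k t\,{\mathcal D}(t)$.
   Context: $|{\mathbf{x}}|$ denotes the Hamming weight (number of nonzero coordinates) of ${\mathbf{x}}$; ${\mathbf{x}}_{\mathcal I}$ denotes the restriction of ${\mathbf{x}}$ to the coordinates in ${\mathcal I}$. *)

theory Defs
  imports "HOL-Probability.Probability"
begin

text \<open>Vectors of length n over a finite field 'a are represented as functions
  nat \<Rightarrow> 'a vanishing outside {..<n}; an m \<times> n matrix H is a function
  nat \<Rightarrow> nat \<Rightarrow> 'a (row index first) vanishing outside {..<m} \<times> {..<n}.\<close>

definition vecs :: "nat \<Rightarrow> (nat \<Rightarrow> 'a::zero) set" where
  "vecs n = {x. \<forall>i. n \<le> i \<longrightarrow> x i = 0}"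

definition mats :: "nat \<Rightarrow> nat \<Rightarrow> (nat \<Rightarrow> nat \<Rightarrow> 'a::zero) set" where
  "mats m n = {H. \<forall>j i. (m \<le> j \<or> n \<le> i) \<longrightarrow> H j i = 0}"

definition hweight :: "nat \<Rightarrow> (nat \<Rightarrow> 'a::zero) \<Rightarrow> nat" where
  "hweight n x = card {i \<in> {..<n}. x i \<noteq> 0}"

definition restr_weight :: "nat set \<Rightarrow> (nat \<Rightarrow> 'a::zero) \<Rightarrow> nat" where
  "restr_weight I x = card {i \<in> I. x i \<noteq> 0}"

definition syndrome :: "nat \<Rightarrow> nat \<Rightarrow> (nat \<Rightarrow> nat \<Rightarrow> 'a::comm_semiring_1) \<Rightarrow> (nat \<Rightarrow> 'a) \<Rightarrow> (nat \<Rightarrow> 'a)" where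
  "syndrome m n H e = (\<lambda>j. if j < m then (\<Sum>i<n. e i * H j i) else 0)"

definition cols_lin_indep :: "nat \<Rightarrow> (nat \<Rightarrow> nat \<Rightarrow> 'a::field) \<Rightarrow> nat set \<Rightarrow> bool" where
  "cols_lin_indep m H J \<longleftrightarrow>
     (\<forall>c::nat \<Rightarrow> 'a. (\<forall>j<m. (\<Sum>i\<in>J. c i * H j i) = 0) \<longrightarrow> (\<forall>i\<in>J. c i = 0))"

definition info_set :: "nat \<Rightarrow> nat \<Rightarrow> (nat \<Rightarrow> nat \<Rightarrow> 'a::field) \<Rightarrow> nat set \<Rightarrow> bool" where
  "info_set n k H I \<longleftrightarrow> I \<subseteq> {..<n} \<and> card I = k \<and>
     cols_lin_indep (n - k) H ({..<n} - I)"

definition good_mats :: "nat \<Rightarrow> nat \<Rightarrow> (nat \<Rightarrow> nat \<Rightarrow> 'a::field) set" where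
  "good_mats n k = {H \<in> mats (n - k) n. \<exists>I. info_set n k H I}"

text \<open>PrangeOne. The information set is chosen by an arbitrary (possibly randomized)
  rule Isel; t ~ D; x uniform among length-n vectors with |x_I| = t; output the
  unique e with e H^T = s and e_I = x_I.\<close>
definition prange_one ::
  "nat \<Rightarrow> nat \<Rightarrow> nat pmf \<Rightarrow> ((nat \<Rightarrow> nat \<Rightarrow> 'a::{finite,field}) \<Rightarrow> nat set pmf)
   \<Rightarrow> (nat \<Rightarrow> nat \<Rightarrow> 'a) \<Rightarrow> (nat \<Rightarrow> 'a) \<Rightarrow> (nat \<Rightarrow> 'a) pmf" where
  "prange_one n k D Isel H s =
     do { t \<leftarrow> D;
          I \<leftarrow> Isel H;
          x \<leftarrow> pmf_of_set {x \<in> vecs n. restr_weight I x = t};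
          return_pmf (THE e. e \<in> vecs n \<and> syndrome (n - k) n H e = s \<and> (\<forall>i\<in>I. e i = x i)) }"

definition prange_output ::
  "nat \<Rightarrow> nat \<Rightarrow> nat pmf \<Rightarrow> ((nat \<Rightarrow> nat \<Rightarrow> 'a::{finite,field}) \<Rightarrow> nat set pmf) \<Rightarrow> (nat \<Rightarrow> 'a) pmf" where
  "prange_output n k D Isel =
     do { H \<leftarrow> pmf_of_set (good_mats n k);
          s \<leftarrow> pmf_of_set (vecs (n - k));
          prange_one n k D Isel H s }"

end

theory Submission
  imports Defs
begin

lemma vecs_PiE: "vecs m = PiE_dflt {..<m} 0 (\<lambda>_. UNIV)"
  by (auto simp: vecs_def PiE_dflt_def)

lemma supp_T:
  assumes "\<forall>i\<in>A. v i \<in> (if i\<in>J then (if i\<in>B then UNIV - {0} else {0}) else S i)"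
    and "B \<subseteq> J" "J \<subseteq> A"
  shows "{i\<in>J. v i \<noteq> 0} = B"
proof (intro set_eqI iffI)
  fix i assume i: "i \<in> {i\<in>J. v i \<noteq> 0}"
  then have "i \<in> A" using assms by auto
  with assms(1) i show "i \<in> B" by (auto split: if_splits)
next
  fix i assume i: "i \<in> B"
  then have "i \<in> A" "i \<in> J" using assms by auto
  with assms(1) i show "i \<in> {i\<in>J. v i \<noteq> 0}" by auto
qed

lemma count_weight:
  fixes S :: "nat \<Rightarrow> 'a::{finite,zero} set"
  assumes A: "finite A" and JA: "J \<subseteq> A"
  shows "card {v \<in> PiE_dflt A 0 (\<lambda>i. if i \<in> J then UNIV else S i). card {i\<in>J. v i \<noteq> 0} = s}
     = (card J choose s) * (CARD('a) - 1)^s * (\<Prod>i\<in>A-J. card (S i))"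
proof -
  define T where "T B i = (if i\<in>J then (if i\<in>B then UNIV - {0} else {0}) else S i)" for B i
  have fJ: "finite J" using A JA finite_subset by blast
  have eq: "{v \<in> PiE_dflt A 0 (\<lambda>i. if i \<in> J then UNIV else S i). card {i\<in>J. v i \<noteq> 0} = s}
      = (\<Union>B\<in>{B. B \<subseteq> J \<and> card B = s}. PiE_dflt A (0::'a) (T B))"
  proof (intro equalityI subsetI)
    fix v assume v: "v \<in> {v \<in> PiE_dflt A 0 (\<lambda>i. if i \<in> J then UNIV else S i). card {i\<in>J. v i \<noteq> 0} = s}"
    show "v \<in> (\<Union>B\<in>{B. B \<subseteq> J \<and> card B = s}. PiE_dflt A (0::'a) (T B))"
      apply (rule UN_I[of "{i\<in>J. v i \<noteq> 0}"])
      using v JA by (auto simp: PiE_dflt_def T_def)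
  next
    fix v assume "v \<in> (\<Union>B\<in>{B. B \<subseteq> J \<and> card B = s}. PiE_dflt A (0::'a) (T B))"
    then obtain B where B: "B \<subseteq> J" "card B = s" and v: "v \<in> PiE_dflt A 0 (T B)" by auto
    have "{i\<in>J. v i \<noteq> 0} = B"
    proof -
      have "\<forall>i\<in>A. v i \<in> T B i" using v by (auto simp: PiE_dflt_def)
      then show ?thesis using B JA supp_T unfolding T_def by blast
    qed
    then show "v \<in> {v \<in> PiE_dflt A 0 (\<lambda>i. if i \<in> J then UNIV else S i). card {i\<in>J. v i \<noteq> 0} = s}"
    proof -
      have "\<forall>x. (x\<in>A \<longrightarrow> v x \<in> (if x\<in>J then UNIV else S x)) \<and> (x\<notin>A \<longrightarrow> v x = 0)"
      proof (intro allI conjI impI)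
        fix x assume "x\<in>A" then have "v x \<in> T B x" using v by (simp add: PiE_dflt_def)
        then show "v x \<in> (if x\<in>J then UNIV else S x)" by (simp add: T_def split: if_splits)
      next
        fix x assume "x\<notin>A" then show "v x = 0" using v by (simp add: PiE_dflt_def)
      qed
      then show ?thesis using B \<open>{i\<in>J. v i \<noteq> 0} = B\<close> by (simp add: PiE_dflt_def)
    qed
  qed
  have cardB: "card (PiE_dflt A (0::'a) (T B)) = (CARD('a) - 1)^s * (\<Prod>i\<in>A-J. card (S i))"
    if B: "B \<subseteq> J" "card B = s" for B
  proof -
    have "card (PiE_dflt A (0::'a) (T B)) = (\<Prod>i\<in>A. card (T B i))"
      using A by (intro card_PiE_dflt) auto
    also have "\<dots> = (\<Prod>i\<in>A-J. card (T B i)) * (\<Prod>i\<in>J. card (T B i))"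
      by (rule prod.subset_diff[OF JA A])
    also have "(\<Prod>i\<in>A-J. card (T B i)) = (\<Prod>i\<in>A-J. card (S i))"
      by (rule prod.cong) (auto simp: T_def)
    also have "(\<Prod>i\<in>J. card (T B i)) = (\<Prod>i\<in>J-B. card (T B i)) * (\<Prod>i\<in>B. card (T B i))"
      using fJ B by (intro prod.subset_diff[of B J]) auto
    also have "(\<Prod>i\<in>J-B. card (T B i)) = 1"
      by (rule prod.neutral) (auto simp: T_def)
    also have "(\<Prod>i\<in>B. card (T B i)) = (CARD('a) - 1)^s"
    proof -
      have "(\<Prod>i\<in>B. card (T B i)) = (\<Prod>i\<in>B. CARD('a) - 1)"
        by (rule prod.cong) (use B in \<open>auto simp: T_def card_Diff_singleton\<close>)
      then show ?thesis using B by simp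
    qed
    finally show ?thesis by (simp add: mult.commute)
  qed
  have "card (\<Union>B\<in>{B. B \<subseteq> J \<and> card B = s}. PiE_dflt A (0::'a) (T B))
     = (\<Sum>B\<in>{B. B \<subseteq> J \<and> card B = s}. card (PiE_dflt A (0::'a) (T B)))"
  proof (rule card_UN_disjoint)
    show "finite {B. B \<subseteq> J \<and> card B = s}" using fJ by auto
    show "\<forall>B\<in>{B. B \<subseteq> J \<and> card B = s}. finite (PiE_dflt A (0::'a) (T B))"
      using A by auto
    show "\<forall>B\<in>{B. B \<subseteq> J \<and> card B = s}. \<forall>B'\<in>{B. B \<subseteq> J \<and> card B = s}. B \<noteq> B' \<longrightarrow>
        PiE_dflt A (0::'a) (T B) \<inter> PiE_dflt A (0::'a) (T B') = {}"
    proof (intro ballI impI)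
      fix B B' assume B: "B \<in> {B. B \<subseteq> J \<and> card B = s}" and B': "B' \<in> {B. B \<subseteq> J \<and> card B = s}"
        and ne: "B \<noteq> B'"
      show "PiE_dflt A (0::'a) (T B) \<inter> PiE_dflt A (0::'a) (T B') = {}"
      proof (rule ccontr)
        assume "PiE_dflt A (0::'a) (T B) \<inter> PiE_dflt A (0::'a) (T B') \<noteq> {}"
        then obtain v where v: "v \<in> PiE_dflt A 0 (T B)" "v \<in> PiE_dflt A 0 (T B')" by blast
        have "\<forall>i\<in>A. v i \<in> T B i" "\<forall>i\<in>A. v i \<in> T B' i" using v by (auto simp: PiE_dflt_def)
        then have "{i\<in>J. v i \<noteq> 0} = B" "{i\<in>J. v i \<noteq> 0} = B'" using B B' JA supp_T unfolding T_def by blast+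
        then show False using ne by simp
      qed
    qed
  qed
  also have "\<dots> = (\<Sum>B\<in>{B. B \<subseteq> J \<and> card B = s}. (CARD('a) - 1)^s * (\<Prod>i\<in>A-J. card (S i)))"
    by (rule sum.cong) (auto simp: cardB)
  also have "\<dots> = (card J choose s) * ((CARD('a) - 1)^s * (\<Prod>i\<in>A-J. card (S i)))"
    using fJ by (simp add: n_subsets)
  finally show ?thesis by (subst eq) (simp add: mult.assoc)
qed

lemma finite_vecs: "finite (vecs m :: (nat \<Rightarrow> 'a::{finite,zero}) set)"
  unfolding vecs_PiE by (intro finite_PiE_dflt) auto

lemma vecs_ne: "vecs m \<noteq> {}"
  by (auto simp: vecs_def intro!: exI[of _ "\<lambda>_. 0"])

lemma card_vecs: "card (vecs m :: (nat \<Rightarrow> 'a::{finite,zero}) set) = CARD('a)^m"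
  unfolding vecs_PiE by (subst card_PiE_dflt) auto

lemma card_weight_vecs:
  "card {v \<in> (vecs m :: (nat \<Rightarrow> 'a::{finite,zero}) set). hweight m v = s} = (m choose s) * (CARD('a) - 1)^s"
proof -
  have "{v \<in> (vecs m :: (nat \<Rightarrow> 'a::{finite,zero}) set). hweight m v = s}
     = {v \<in> PiE_dflt {..<m} 0 (\<lambda>i. if i \<in> {..<m} then UNIV else (\<lambda>_. UNIV) i). card {i\<in>{..<m}. v i \<noteq> 0} = s}"
    by (auto simp: vecs_def PiE_dflt_def hweight_def)
  also have "card \<dots> = (m choose s) * (CARD('a) - 1)^s"
    by (subst count_weight) auto
  finally show ?thesis .
qed

lemma pmf_shift:
  "pmf (map_pmf (\<lambda>v. hweight m v + t) (pmf_of_set (vecs m :: (nat \<Rightarrow> 'a::{finite,zero}) set))) w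
   = (if t \<le> w then real (m choose (w - t)) * real (CARD('a) - 1)^(w - t) / real (CARD('a))^m else 0)"
proof -
  have "pmf (map_pmf (\<lambda>v. hweight m v + t) (pmf_of_set (vecs m :: (nat \<Rightarrow> 'a) set))) w
      = card ((vecs m :: (nat \<Rightarrow> 'a) set) \<inter> (\<lambda>v. hweight m v + t) -` {w}) / card (vecs m :: (nat \<Rightarrow> 'a) set)"
    by (simp add: pmf_map measure_pmf_of_set finite_vecs vecs_ne)
  moreover have "(vecs m :: (nat \<Rightarrow> 'a) set) \<inter> (\<lambda>v. hweight m v + t) -` {w} =
      (if t \<le> w then {v \<in> (vecs m :: (nat \<Rightarrow> 'a) set). hweight m v = w - t} else {})"
    by auto
  ultimately show ?thesis by (simp add: card_weight_vecs card_vecs)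
qed

lemma lemA:
  fixes H :: "nat \<Rightarrow> nat \<Rightarrow> 'a::{finite,field}" and x :: "nat \<Rightarrow> 'a"
  assumes kn: "k < n" and inf: "info_set n k H I" and xv: "x \<in> vecs n" and xw: "restr_weight I x = t"
  shows "map_pmf (\<lambda>s. hweight n (THE e. e \<in> vecs n \<and> syndrome (n - k) n H e = s \<and> (\<forall>i\<in>I. e i = x i)))
            (pmf_of_set (vecs (n - k)))
       = map_pmf (\<lambda>v. hweight (n - k) v + t) (pmf_of_set (vecs (n - k) :: (nat \<Rightarrow> 'a) set))"
proof -
  define m where "m = n - k"
  define J where "J = {..<n} - I"
  define E where "E = {e \<in> (vecs n :: (nat \<Rightarrow> 'a) set). \<forall>i\<in>I. e i = x i}"
  define synd where "synd = syndrome m n H"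
  have In: "I \<subseteq> {..<n}" and cI: "card I = k" and ind: "cols_lin_indep m H J"
    using inf by (auto simp: info_set_def m_def J_def)
  have cJ: "card J = m" using In cI by (simp add: J_def m_def card_Diff_subset finite_subset)
  have JI: "J \<subseteq> {..<n}" by (auto simp: J_def)
  have E_eq: "E = PiE_dflt {..<n} 0 (\<lambda>i. if i \<in> J then UNIV else {x i})"
    using In xv by (auto simp: E_def J_def PiE_dflt_def vecs_def)
  have fE: "finite E" unfolding E_eq by (intro finite_PiE_dflt) auto
  have cE: "card E = CARD('a)^m"
  proof -
    have "card E = (\<Prod>i<n. card (if i \<in> J then (UNIV::'a set) else {x i}))"
      unfolding E_eq by (subst card_PiE_dflt) auto
    also have "\<dots> = (\<Prod>i\<in>{..<n}-J. card (if i \<in> J then (UNIV::'a set) else {x i}))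
                   * (\<Prod>i\<in>J. card (if i \<in> J then (UNIV::'a set) else {x i}))"
      by (rule prod.subset_diff[OF JI]) auto
    also have "(\<Prod>i\<in>{..<n}-J. card (if i \<in> J then (UNIV::'a set) else {x i})) = 1"
      by (rule prod.neutral) auto
    also have "(\<Prod>i\<in>J. card (if i \<in> J then (UNIV::'a set) else {x i})) = (\<Prod>i\<in>J. CARD('a))"
      by (rule prod.cong) auto
    finally show ?thesis using cJ by simp
  qed
  have inj: "inj_on synd E"
  proof (rule inj_onI)
    fix e e' assume e: "e \<in> E" and e': "e' \<in> E" and eq: "synd e = synd e'"
    define c where "c = (\<lambda>i. e i - e' i)"
    have c0: "c i = 0" if "i \<notin> J" for i
    proof (cases "i < n")
      case True then have "i \<in> I" using that by (auto simp: J_def)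
      then show ?thesis using e e' by (simp add: c_def E_def)
    next
      case False then show ?thesis using e e' by (simp add: c_def E_def vecs_def)
    qed
    have "\<forall>j<m. (\<Sum>i\<in>J. c i * H j i) = 0"
    proof (intro allI impI)
      fix j assume j: "j < m"
      have "(\<Sum>i<n. e i * H j i) = (\<Sum>i<n. e' i * H j i)"
        using eq j unfolding synd_def syndrome_def by meson
      then have "(\<Sum>i<n. c i * H j i) = 0"
        by (simp add: c_def left_diff_distrib sum_subtractf)
      moreover have "(\<Sum>i<n. c i * H j i) = (\<Sum>i\<in>J. c i * H j i)"
        by (rule sum.mono_neutral_right) (auto simp: JI c0)
      ultimately show "(\<Sum>i\<in>J. c i * H j i) = 0" by simp
    qed
    then have "\<forall>i\<in>J. c i = 0" using ind unfolding cols_lin_indep_def by blast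
    then have "\<forall>i. c i = 0" using c0 by blast
    then show "e = e'" by (auto simp: c_def fun_eq_iff)
  qed
  have sub: "synd ` E \<subseteq> vecs m" by (auto simp: synd_def syndrome_def vecs_def)
  have img: "synd ` E = vecs m"
    by (rule card_subset_eq[OF finite_vecs sub]) (simp add: card_image[OF inj] cE card_vecs)
  have bij: "bij_betw synd E (vecs m)" using inj img by (simp add: bij_betw_def)
  have THE_eq: "(THE e. e \<in> vecs n \<and> syndrome (n - k) n H e = s \<and> (\<forall>i\<in>I. e i = x i)) = inv_into E synd s"
    if s: "s \<in> vecs m" for s
  proof (rule the_equality)
    have "inv_into E synd s \<in> E" using s img by (metis inv_into_into)
    moreover have "synd (inv_into E synd s) = s" using s img by (metis f_inv_into_f)
    ultimately show "inv_into E synd s \<in> vecs n \<and> syndrome (n - k) n H (inv_into E synd s) = s \<and>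
        (\<forall>i\<in>I. inv_into E synd s i = x i)" by (auto simp: E_def synd_def m_def)
  next
    fix e assume "e \<in> vecs n \<and> syndrome (n - k) n H e = s \<and> (\<forall>i\<in>I. e i = x i)"
    then have "e \<in> E" "synd e = s" by (auto simp: E_def synd_def m_def)
    then show "e = inv_into E synd s" using inj by (metis inv_into_f_f)
  qed
  have "map_pmf (\<lambda>s. hweight n (THE e. e \<in> vecs n \<and> syndrome (n - k) n H e = s \<and> (\<forall>i\<in>I. e i = x i)))
            (pmf_of_set (vecs (n - k)))
      = map_pmf (\<lambda>s. hweight n (inv_into E synd s)) (pmf_of_set (vecs m))"
    by (rule map_pmf_cong) (auto simp: m_def finite_vecs vecs_ne THE_eq)
  also have "\<dots> = map_pmf (hweight n) (map_pmf (inv_into E synd) (pmf_of_set (vecs m)))"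
    by (simp add: pmf.map_comp o_def)
  also have "map_pmf (inv_into E synd) (pmf_of_set (vecs m)) = pmf_of_set (inv_into E synd ` vecs m)"
    by (rule map_pmf_of_set_inj) (auto simp: img finite_vecs vecs_ne intro: inj_on_inv_into)
  also have "inv_into E synd ` vecs m = E"
    using img inj by (metis inv_into_image_cancel order_refl)
  also have "map_pmf (hweight n) (pmf_of_set E)
      = map_pmf (\<lambda>v. hweight m v + t) (pmf_of_set (vecs m :: (nat \<Rightarrow> 'a) set))"
  proof (rule pmf_eqI)
    fix w
    have Ene: "E \<noteq> {}" using img vecs_ne by blast
    have hw: "hweight n e = t + card {i\<in>J. e i \<noteq> 0}" if "e \<in> E" for e
    proof -
      have "{i\<in>{..<n}. e i \<noteq> 0} = {i\<in>I. e i \<noteq> 0} \<union> {i\<in>J. e i \<noteq> 0}"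
        using In by (auto simp: J_def)
      moreover have "card ({i\<in>I. e i \<noteq> 0} \<union> {i\<in>J. e i \<noteq> 0}) = card {i\<in>I. e i \<noteq> 0} + card {i\<in>J. e i \<noteq> 0}"
        by (rule card_Un_disjoint) (use In in \<open>auto simp: J_def intro: finite_subset\<close>)
      moreover have "{i\<in>I. e i \<noteq> 0} = {i\<in>I. x i \<noteq> 0}" using that by (auto simp: E_def)
      ultimately show ?thesis using xw by (simp add: hweight_def restr_weight_def)
    qed
    have "pmf (map_pmf (hweight n) (pmf_of_set E)) w = card (E \<inter> hweight n -` {w}) / card E"
      by (simp add: pmf_map measure_pmf_of_set fE Ene)
    moreover have "E \<inter> hweight n -` {w} =
       (if t \<le> w then {v \<in> PiE_dflt {..<n} 0 (\<lambda>i. if i \<in> J then UNIV else {x i}). card {i\<in>J. v i \<noteq> 0} = w - t} else {})"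
      using hw unfolding E_eq[symmetric] by auto
    moreover have "card {v \<in> PiE_dflt {..<n} 0 (\<lambda>i. if i \<in> J then UNIV else {x i}). card {i\<in>J. v i \<noteq> 0} = w - t}
        = (m choose (w - t)) * (CARD('a) - 1)^(w - t)"
      by (subst count_weight[OF _ JI]) (auto simp: cJ)
    ultimately show "pmf (map_pmf (hweight n) (pmf_of_set E)) w =
        pmf (map_pmf (\<lambda>v. hweight m v + t) (pmf_of_set (vecs m :: (nat \<Rightarrow> 'a) set))) w"
      by (simp add: pmf_shift cE)
  qed
  finally show ?thesis by (simp add: m_def)
qed

lemma finite_good: "finite (good_mats n k :: (nat \<Rightarrow> nat \<Rightarrow> 'a::{finite,field}) set)"
proof -
  have "good_mats n k \<subseteq> PiE_dflt {..<n-k} (\<lambda>_. 0) (\<lambda>_. vecs n :: (nat \<Rightarrow> 'a) set)"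
    by (auto simp: good_mats_def mats_def PiE_dflt_def vecs_def fun_eq_iff)
  moreover have "finite (PiE_dflt {..<n-k} (\<lambda>_. 0) (\<lambda>_. vecs n :: (nat \<Rightarrow> 'a) set))"
    by (intro finite_PiE_dflt) (auto simp: finite_vecs)
  ultimately show ?thesis by (rule finite_subset)
qed

lemma good_ne:
  assumes "k < n"
  shows "good_mats n k \<noteq> ({} :: (nat \<Rightarrow> nat \<Rightarrow> 'a::{finite,field}) set)"
proof -
  define H0 :: "nat \<Rightarrow> nat \<Rightarrow> 'a" where "H0 = (\<lambda>j i. if j < n - k \<and> i = j + k then 1 else 0)"
  have "H0 \<in> mats (n - k) n" using assms by (auto simp: H0_def mats_def)
  moreover have "info_set n k H0 {..<k}"
    unfolding info_set_def cols_lin_indep_def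
  proof (intro conjI allI impI ballI)
    show "{..<k} \<subseteq> {..<n}" using assms by auto
    show "card {..<k} = k" by simp
    fix c :: "nat \<Rightarrow> 'a" and i
    assume h: "\<forall>j<n - k. (\<Sum>i\<in>{..<n} - {..<k}. c i * H0 j i) = 0" and i: "i \<in> {..<n} - {..<k}"
    have j: "i - k < n - k" using i by auto
    have "(\<Sum>i'\<in>{..<n} - {..<k}. c i' * H0 (i - k) i') = (\<Sum>i'\<in>{i}. c i' * H0 (i - k) i')"
      by (rule sum.mono_neutral_right) (use i j in \<open>auto simp: H0_def\<close>)
    also have "\<dots> = c i" using i j by (simp add: H0_def)
    finally show "c i = 0" using h j by simp
  qed
  ultimately show ?thesis by (auto simp: good_mats_def)
qed

lemma X_ne:
  assumes "info_set n k H I" "t \<le> k"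
  shows "{x \<in> (vecs n :: (nat \<Rightarrow> 'a::{finite,field}) set). restr_weight I x = t} \<noteq> {}"
proof -
  have In: "I \<subseteq> {..<n}" and cI: "card I = k" using assms by (auto simp: info_set_def)
  obtain B where B: "B \<subseteq> I" "card B = t"
    using obtain_subset_with_card_n[of t I] assms cI by auto
  define x :: "nat \<Rightarrow> 'a" where "x = (\<lambda>i. if i \<in> B then 1 else 0)"
  have "x \<in> vecs n" using B In by (auto simp: x_def vecs_def)
  moreover have "{i \<in> I. x i \<noteq> 0} = B" using B by (auto simp: x_def)
  ultimately show ?thesis using B by (auto simp: restr_weight_def)
qed

lemma key:
  fixes n k :: nat and D :: "nat pmf"
    and Isel :: "(nat \<Rightarrow> nat \<Rightarrow> 'a::{finite,field}) \<Rightarrow> nat set pmf"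
  assumes kn: "k < n"
    and D: "set_pmf D \<subseteq> {0..k}"
    and Is: "\<And>H. H \<in> good_mats n k \<Longrightarrow> set_pmf (Isel H) \<subseteq> {I. info_set n k H I}"
  shows "map_pmf (hweight n) (prange_output n k D Isel) =
     bind_pmf D (\<lambda>t. map_pmf (\<lambda>v. hweight (n - k) v + t) (pmf_of_set (vecs (n - k) :: (nat \<Rightarrow> 'a) set)))"
proof -
  define U where "U = (pmf_of_set (vecs (n - k)) :: (nat \<Rightarrow> 'a) pmf)"
  define X where "X = (\<lambda>I t. pmf_of_set {x \<in> (vecs n :: (nat \<Rightarrow> 'a) set). restr_weight I x = t})"
  define EE where "EE = (\<lambda>H s I (x::nat \<Rightarrow> 'a). THE e. e \<in> vecs n \<and> syndrome (n - k) n H e = s \<and> (\<forall>i\<in>I. e i = x i))"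
  have po: "prange_one n k D Isel H s = bind_pmf D (\<lambda>t. bind_pmf (Isel H) (\<lambda>I. bind_pmf (X I t) (\<lambda>x. return_pmf (EE H s I x))))"
    for H s unfolding prange_one_def X_def EE_def by simp
  have sw: "bind_pmf U (\<lambda>s. prange_one n k D Isel H s) =
       bind_pmf D (\<lambda>t. bind_pmf (Isel H) (\<lambda>I. bind_pmf (X I t) (\<lambda>x. bind_pmf U (\<lambda>s. return_pmf (EE H s I x)))))" for H
    unfolding po by (simp add: bind_commute_pmf[of U])
  have "map_pmf (hweight n) (prange_output n k D Isel) =
     bind_pmf (pmf_of_set (good_mats n k)) (\<lambda>H. bind_pmf D (\<lambda>t. bind_pmf (Isel H) (\<lambda>I. bind_pmf (X I t)
        (\<lambda>x. map_pmf (\<lambda>s. hweight n (EE H s I x)) U))))"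
    unfolding prange_output_def U_def[symmetric] sw by (simp add: map_pmf_def bind_assoc_pmf bind_return_pmf)
  also have "\<dots> = bind_pmf (pmf_of_set (good_mats n k)) (\<lambda>H. bind_pmf D (\<lambda>t. bind_pmf (Isel H) (\<lambda>I. bind_pmf (X I t)
        (\<lambda>x. map_pmf (\<lambda>v. hweight (n - k) v + t) U))))"
  proof (intro bind_pmf_cong refl)
    fix H t I x
    assume H: "H \<in> set_pmf (pmf_of_set (good_mats n k))" and t: "t \<in> set_pmf D"
      and I: "I \<in> set_pmf (Isel H)" and x: "x \<in> set_pmf (X I t)"
    have H': "H \<in> good_mats n k" using H set_pmf_of_set[OF good_ne[OF kn] finite_good] by auto
    have inf: "info_set n k H I" using Is[OF H'] I by auto
    have tk: "t \<le> k" using D t by auto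
    have x': "x \<in> vecs n" "restr_weight I x = t"
    proof -
      have "finite {x \<in> (vecs n :: (nat \<Rightarrow> 'a) set). restr_weight I x = t}"
        using finite_vecs[where m=n] by auto
      then have "set_pmf (X I t) = {x \<in> (vecs n :: (nat \<Rightarrow> 'a) set). restr_weight I x = t}"
        unfolding X_def by (intro set_pmf_of_set X_ne[OF inf tk])
      then show "x \<in> vecs n" "restr_weight I x = t" using x by auto
    qed
    show "map_pmf (\<lambda>s. hweight n (EE H s I x)) U = map_pmf (\<lambda>v. hweight (n - k) v + t) U"
      unfolding U_def EE_def by (rule lemA[OF kn inf x'])
  qed
  also have "\<dots> = bind_pmf D (\<lambda>t. map_pmf (\<lambda>v. hweight (n - k) v + t) U)" by simp
  finally show ?thesis by (simp add: U_def)
qed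

lemma card_nz:
  assumes "i < m"
  shows "card {v \<in> (vecs m :: (nat \<Rightarrow> 'a::{finite,zero}) set). v i \<noteq> 0} = (CARD('a) - 1) * CARD('a)^(m - 1)"
proof -
  have "{v \<in> (vecs m :: (nat \<Rightarrow> 'a) set). v i \<noteq> 0} = PiE_dflt {..<m} 0 (\<lambda>j. if j = i then UNIV - {0} else UNIV)"
    using assms by (auto simp: vecs_def PiE_dflt_def)
  also have "card \<dots> = (\<Prod>j<m. card (if j = i then UNIV - {0::'a} else UNIV))"
    by (subst card_PiE_dflt) auto
  also have "\<dots> = card (UNIV - {0::'a}) * (\<Prod>j\<in>{..<m} - {i}. card (if j = i then UNIV - {0::'a} else UNIV))"
    using assms by (subst prod.remove[of _ i]) auto
  also have "(\<Prod>j\<in>{..<m} - {i}. card (if j = i then UNIV - {0::'a} else UNIV)) = (\<Prod>j\<in>{..<m} - {i}. CARD('a))"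
    by (rule prod.cong) auto
  also have "\<dots> = CARD('a)^(m - 1)" using assms by simp
  finally show ?thesis by (simp add: card_Diff_singleton)
qed

lemma exp_S:
  "measure_pmf.expectation (pmf_of_set (vecs m :: (nat \<Rightarrow> 'a::{finite,zero}) set)) (\<lambda>v. real (hweight m v))
    = real (CARD('a) - 1) / real CARD('a) * real m"
proof -
  let ?V = "vecs m :: (nat \<Rightarrow> 'a) set"
  have "(\<Sum>v\<in>?V. hweight m v) = (\<Sum>v\<in>?V. \<Sum>i<m. if v i \<noteq> 0 then 1 else 0)"
    by (rule sum.cong) (auto simp: hweight_def sum.If_cases Int_def)
  also have "\<dots> = (\<Sum>i<m. \<Sum>v\<in>?V. if v i \<noteq> 0 then 1 else 0)" by (rule sum.swap)
  also have "\<dots> = (\<Sum>i<m. card {v \<in> ?V. v i \<noteq> 0})"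
    by (rule sum.cong) (auto simp: sum.If_cases finite_vecs Int_def)
  also have "\<dots> = (\<Sum>i<m. (CARD('a) - 1) * CARD('a)^(m - 1))"
    by (rule sum.cong) (auto simp: card_nz)
  finally have sum_eq: "(\<Sum>v\<in>?V. hweight m v) = m * ((CARD('a) - 1) * CARD('a)^(m - 1))" by simp
  have "measure_pmf.expectation (pmf_of_set ?V) (\<lambda>v. real (hweight m v)) = (\<Sum>v\<in>?V. real (hweight m v)) / card ?V"
    by (rule integral_pmf_of_set[OF vecs_ne finite_vecs])
  also have "(\<Sum>v\<in>?V. real (hweight m v)) = real (m * ((CARD('a) - 1) * CARD('a)^(m - 1)))"
    unfolding sum_eq[symmetric] by simp
  also have "card ?V = CARD('a)^m" by (rule card_vecs)
  finally have e: "measure_pmf.expectation (pmf_of_set ?V) (\<lambda>v. real (hweight m v))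
     = real m * real (CARD('a) - 1) * real (CARD('a))^(m - 1) / real (CARD('a))^m" by simp
  show ?thesis
  proof (cases m)
    case 0 then show ?thesis using e by simp
  next
    case (Suc m')
    define c :: real where "c = real (CARD('a))^(m - 1)"
    have c: "c \<noteq> 0" by (simp add: c_def)
    have "real (CARD('a))^m = real (CARD('a)) * c" using Suc by (simp add: c_def)
    then have "measure_pmf.expectation (pmf_of_set ?V) (\<lambda>v. real (hweight m v))
        = (real m * real (CARD('a) - 1)) * c / (real (CARD('a)) * c)" using e by (simp add: c_def)
    also have "\<dots> = real m * real (CARD('a) - 1) / real (CARD('a))" using c by simp
    finally show ?thesis by simp
  qed
qed

theorem proposition2:
  fixes n k :: nat
    and D :: "nat pmf"
    and Isel :: "(nat \<Rightarrow> nat \<Rightarrow> 'a::{finite,field}) \<Rightarrow> nat set pmf"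
  assumes "k < n"
    and "set_pmf D \<subseteq> {0..k}"
    and "\<And>H. H \<in> good_mats n k \<Longrightarrow> set_pmf (Isel H) \<subseteq> {I. info_set n k H I}"
  defines "q \<equiv> CARD('a)"
  shows "map_pmf (hweight n) (prange_output n k D Isel) =
           map_pmf (\<lambda>(s, t). s + t)
             (pair_pmf (map_pmf (hweight (n - k)) (pmf_of_set (vecs (n - k) :: (nat \<Rightarrow> 'a) set))) D)
       \<and> (\<forall>w. measure_pmf.prob (prange_output n k D Isel) {e. hweight n e = w} =
           (\<Sum>t = 0..w. real ((n - k) choose (w - t)) * real (q - 1) ^ (w - t) / real q ^ (n - k)
                        * pmf D t))
       \<and> measure_pmf.expectation (prange_output n k D Isel) (\<lambda>e. real (hweight n e)) =
           (\<Sum>t = 0..k. real t * pmf D t) + real (q - 1) / real q * real (n - k)"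
proof -
  define U where "U = (pmf_of_set (vecs (n - k)) :: (nat \<Rightarrow> 'a) pmf)"
  define R where "R = bind_pmf D (\<lambda>t. map_pmf (\<lambda>v. hweight (n - k) v + t) U)"
  have K: "map_pmf (hweight n) (prange_output n k D Isel) = R"
    unfolding R_def U_def by (rule key[OF assms(1-3)])
  have P1: "R = map_pmf (\<lambda>(s, t). s + t) (pair_pmf (map_pmf (hweight (n - k)) U) D)"
    unfolding R_def pair_pmf_def
    by (simp add: map_pmf_def bind_assoc_pmf bind_return_pmf bind_commute_pmf[of D])
  have P2: "measure_pmf.prob (prange_output n k D Isel) {e. hweight n e = w} =
           (\<Sum>t = 0..w. real ((n - k) choose (w - t)) * real (q - 1) ^ (w - t) / real q ^ (n - k)
                        * pmf D t)" for w
  proof -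
    have "measure_pmf.prob (prange_output n k D Isel) {e. hweight n e = w}
        = measure_pmf.prob (map_pmf (hweight n) (prange_output n k D Isel)) {w}"
      by (simp add: vimage_def)
    also have "\<dots> = pmf R w" by (simp add: K measure_pmf_single)
    also have "\<dots> = (\<integral>t. pmf (map_pmf (\<lambda>v. hweight (n - k) v + t) U) w \<partial>measure_pmf D)"
      unfolding R_def by (rule pmf_bind)
    also have "\<dots> = (\<Sum>t\<in>{0..w}. pmf D t *\<^sub>R pmf (map_pmf (\<lambda>v. hweight (n - k) v + t) U) w)"
      by (rule integral_measure_pmf) (auto simp: U_def pmf_shift split: if_splits)
    also have "\<dots> = (\<Sum>t = 0..w. real ((n - k) choose (w - t)) * real (q - 1) ^ (w - t) / real q ^ (n - k)
                        * pmf D t)"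
      by (rule sum.cong) (auto simp: U_def pmf_shift q_def)
    finally show ?thesis .
  qed
  have P3: "measure_pmf.expectation (prange_output n k D Isel) (\<lambda>e. real (hweight n e)) =
           (\<Sum>t = 0..k. real t * pmf D t) + real (q - 1) / real q * real (n - k)"
  proof -
    have fin1: "finite (set_pmf (map_pmf (hweight (n - k)) U))"
      by (simp add: U_def finite_vecs vecs_ne)
    have fin2: "finite (set_pmf D)" using assms(2) finite_subset by blast
    have fin: "finite (set_pmf (pair_pmf (map_pmf (hweight (n - k)) U) D))"
      using fin1 fin2 by (simp add: set_pair_pmf)
    have "measure_pmf.expectation (prange_output n k D Isel) (\<lambda>e. real (hweight n e))
        = measure_pmf.expectation (map_pmf (hweight n) (prange_output n k D Isel)) real"
      by simp
    also have "\<dots> = measure_pmf.expectation (pair_pmf (map_pmf (hweight (n - k)) U) D)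
                        (\<lambda>p. real (fst p) + real (snd p))"
      unfolding K P1 by (simp add: case_prod_beta)
    also have "\<dots> = measure_pmf.expectation (pair_pmf (map_pmf (hweight (n - k)) U) D) (\<lambda>p. real (fst p))
        + measure_pmf.expectation (pair_pmf (map_pmf (hweight (n - k)) U) D) (\<lambda>p. real (snd p))"
      by (rule Bochner_Integration.integral_add) (auto intro: integrable_measure_pmf_finite[OF fin])
    also have "measure_pmf.expectation (pair_pmf (map_pmf (hweight (n - k)) U) D) (\<lambda>p. real (fst p))
        = measure_pmf.expectation U (\<lambda>v. real (hweight (n - k) v))"
      by simp
    also have "\<dots> = real (q - 1) / real q * real (n - k)" unfolding U_def q_def by (rule exp_S)
    also have "measure_pmf.expectation (pair_pmf (map_pmf (hweight (n - k)) U) D) (\<lambda>p. real (snd p))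
        = measure_pmf.expectation D real" by simp
    also have "\<dots> = (\<Sum>t\<in>{0..k}. pmf D t *\<^sub>R real t)"
      by (rule integral_measure_pmf) (use assms(2) in auto)
    finally show ?thesis by (simp add: mult.commute)
  qed
  show ?thesis using K P1 P2 P3 by (simp add: U_def)
qed

end
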